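(* Let $m$ be a positive integer and $F$ a distribution function with finite $m$-th absolute moment. Then $\mathsf L_{F,m}$ is invertible in $(\mathbb R_m[\mathrm D],\circ)$ and $$\mathsf L_{F,m}^{-1}=\sum_{n=0}^m\Bigl(\sum_{p\in\mathcal P(m,n)}(-1)^{n+p_1}\binom{p_1}{\Delta p}\prod_{k=1}^m\Bigl(\frac{\mu_{F,k}}{k!}\Bigr)^{(\Delta p)_k}\Bigr)\mathrm D^n.$$
   Context: $(\mathbb R_m[\mathrm D],\circ)$ is the ring of polynomials in $\mathrm D$ of degree at most $m$ with multiplication of polynomials modulo $\mathrm D^{m+1}$. $\mu_{F,k}=\int x^k\,dF(x)$ and $\mathsf L_{F,m}=\sum_{k=0}^m\frac{(-1)^k}{k!}\mu_{F,k}\mathrm D^k$. An ordered partition of length $k$ of an integer $n$ is a $k$-tuple of positive integers $p_1\ge\dots\ge p_k>0$ with sum $n$; one sets $p_i=0$ for $i>k$ (the empty partition, of length $0$, is the partition of $n=0$). $\mathcal P(m,n)$ is the set of ordered partitions of $n$ of length at most $m$. For such $p$, $\Delta p=(p_1-p_2,p_2-p_3,\dots,p_m-p_{m+1})$, and for a tuple $k=(k_1,\dots,k_m)$ of nonnegative integers with sum $q$, $\binom{q}{k}=q!/(k_1!\cdots k_m!)$. *)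

theory Defs
  imports "HOL-Probability.Probability" "HOL-Computational_Algebra.Polynomial"
begin

definition distribution_function :: "(real \<Rightarrow> real) \<Rightarrow> bool" where
  "distribution_function F \<longleftrightarrow> mono F \<and> (\<forall>a. continuous (at_right a) F)
     \<and> (F \<longlongrightarrow> 0) at_bot \<and> (F \<longlongrightarrow> 1) at_top"

definition moment :: "(real \<Rightarrow> real) \<Rightarrow> nat \<Rightarrow> real" where
  "moment F k = (\<integral>x. x ^ k \<partial>(interval_measure F))"

text \<open>Multiplication in R_m[D]: polynomial product modulo D^(m+1).\<close>
definition tmult :: "nat \<Rightarrow> real poly \<Rightarrow> real poly \<Rightarrow> real poly" where
  "tmult m p q = (\<Sum>i\<le>m. monom (coeff (p * q) i) i)"

definition trunc_invertible :: "nat \<Rightarrow> real poly \<Rightarrow> bool" where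
  "trunc_invertible m p \<longleftrightarrow> degree p \<le> m \<and>
     (\<exists>q. degree q \<le> m \<and> tmult m p q = 1 \<and> tmult m q p = 1)"

definition L_op :: "(real \<Rightarrow> real) \<Rightarrow> nat \<Rightarrow> real poly" where
  "L_op F m = (\<Sum>k\<le>m. monom ((-1) ^ k / fact k * moment F k) k)"

definition partitions :: "nat \<Rightarrow> nat \<Rightarrow> (nat \<Rightarrow> nat) set" where
  "partitions m n = {p. (\<forall>i. i \<notin> {1..m} \<longrightarrow> p i = 0) \<and>
      (\<forall>i\<in>{1..<m}. p (Suc i) \<le> p i) \<and> (\<Sum>i=1..m. p i) = n}"

definition Delta :: "(nat \<Rightarrow> nat) \<Rightarrow> nat \<Rightarrow> nat" where
  "Delta p k = p k - p (Suc k)"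

text \<open>Multinomial coefficient binom(q, k) with q = k_1+...+k_m.\<close>
definition multinom :: "nat \<Rightarrow> nat \<Rightarrow> (nat \<Rightarrow> nat) \<Rightarrow> real" where
  "multinom m q k = fact q / (\<Prod>i=1..m. fact (k i))"

definition L_inv_formula :: "(real \<Rightarrow> real) \<Rightarrow> nat \<Rightarrow> real poly" where
  "L_inv_formula F m = (\<Sum>n\<le>m. monom
     (\<Sum>p\<in>partitions m n. (-1) ^ (n + p 1) * multinom m (p 1) (Delta p) *
        (\<Prod>k=1..m. (moment F k / fact k) ^ (Delta p k))) n)"

end

theory Submission
  imports Defs
begin

lemma part_zero: "p \<in> partitions m n \<Longrightarrow> i \<notin> {1..m} \<Longrightarrow> p i = 0"
  by (auto simp: partitions_def)

lemma part_sum: "p \<in> partitions m n \<Longrightarrow> (\<Sum>i=1..m. p i) = n"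
  by (auto simp: partitions_def)

lemma mono_part:
  assumes "p \<in> partitions m n" "1 \<le> i" "i \<le> j" shows "p j \<le> p i"
  using assms(3)
proof (induction j rule: dec_induct)
  case base then show ?case by simp
next
  case (step j)
  show ?case
  proof (cases "j < m")
    case True
    then have "p (Suc j) \<le> p j" using assms(1,2) step.hyps by (auto simp: partitions_def)
    then show ?thesis using step.IH by linarith
  next
    case False
    then have "p (Suc j) = 0" using part_zero[OF assms(1)] by auto
    then show ?thesis by simp
  qed
qed

lemma sum_Delta:
  assumes "p \<in> partitions m n" "m > 0"
  shows "(\<Sum>k=1..m. Delta p k) = p 1"
proof -
  have "int (\<Sum>k=1..m. Delta p k) = (\<Sum>k=1..m. int (p k) - int (p (Suc k)))"
    unfolding of_nat_sum
    by (rule sum.cong) (auto simp: Delta_def of_nat_diff mono_part[OF assms(1)])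
  also have "\<dots> = - (\<Sum>k=1..m. int (p (Suc k)) - int (p k))"
    by (simp add: sum_negf[symmetric])
  also have "\<dots> = int (p 1) - int (p (Suc m))"
    using assms(2) by (subst sum_Suc_diff) auto
  also have "p (Suc m) = 0" using part_zero[OF assms(1)] by auto
  finally have "int (\<Sum>k=1..m. Delta p k) = int (p 1)" by (simp only: of_nat_0 diff_0_right)
  then show ?thesis by (simp only: of_nat_eq_iff)
qed

lemma p1_pos:
  assumes "p \<in> partitions m n" "n > 0" shows "p 1 > 0"
proof (rule ccontr)
  assume "\<not> p 1 > 0"
  then have "\<forall>i\<in>{1..m}. p i = 0" using mono_part[OF assms(1), of 1] by fastforce
  then have "(\<Sum>i=1..m. p i) = 0" by simp
  then show False using part_sum[OF assms(1)] assms(2) by simp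
qed

lemma ge1_below:
  assumes "p \<in> partitions m n" "k \<in> {1..m}" "Delta p k > 0" "i \<in> {1..k}"
  shows "p i \<ge> 1"
proof -
  have "p k \<ge> 1" using assms(3) by (auto simp: Delta_def)
  moreover have "p k \<le> p i" using mono_part[OF assms(1)] assms(4) by auto
  ultimately show ?thesis by simp
qed

lemma count_le: "k \<le> m \<Longrightarrow> (\<Sum>i=1..m. (if i \<le> k then 1 else 0::nat)) = k"
proof (induction m)
  case 0 then show ?case by simp
next
  case (Suc m)
  show ?case
  proof (cases "k \<le> m")
    case True then show ?thesis using Suc by simp
  next
    case False
    then have "k = Suc m" using Suc.prems by simp
    then show ?thesis by simp
  qed
qed

lemma k_le_n:
  assumes "p \<in> partitions m n" "k \<in> {1..m}" "Delta p k > 0"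
  shows "k \<le> n"
proof -
  have "(\<Sum>i=1..m. (if i \<le> k then 1 else 0::nat)) \<le> (\<Sum>i=1..m. p i)"
    by (rule sum_mono) (use ge1_below[OF assms] in auto)
  then show ?thesis using count_le[of k m] assms(2) part_sum[OF assms(1)] by simp
qed

definition dn :: "nat \<Rightarrow> (nat \<Rightarrow> nat) \<Rightarrow> nat \<Rightarrow> nat" where
  "dn k p = (\<lambda>i. if i \<in> {1..k} then p i - 1 else p i)"
definition up :: "nat \<Rightarrow> (nat \<Rightarrow> nat) \<Rightarrow> nat \<Rightarrow> nat" where
  "up k p = (\<lambda>i. if i \<in> {1..k} then p i + 1 else p i)"

lemma dn_part:
  assumes "p \<in> partitions m n" "k \<in> {1..m}" "Delta p k > 0"
  shows "dn k p \<in> partitions m (n - k)"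
    and "dn k p 1 = p 1 - 1"
    and "Delta (dn k p) = (Delta p)(k := Delta p k - 1)"
    and "up k (dn k p) = p"
proof -
  note g = ge1_below[OF assms]
  have g': "\<And>i. 1 \<le> i \<Longrightarrow> i \<le> k \<Longrightarrow> 1 \<le> p i" using g by auto
  note z = part_zero[OF assms(1)]
  have m: "\<And>i. i \<in> {1..<m} \<Longrightarrow> p (Suc i) \<le> p i" using assms(1) by (auto simp: partitions_def)
  have s: "(\<Sum>i=1..m. p i) = (\<Sum>i=1..m. dn k p i) + (\<Sum>i=1..m. (if i \<le> k then 1 else 0::nat))"
    unfolding sum.distrib[symmetric]
  proof (rule sum.cong)
    fix x assume "x \<in> {1..m}" then show "p x = dn k p x + (if x \<le> k then 1 else 0)"
      using g'[of x] by (auto simp: dn_def)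
  qed simp
  have "(\<Sum>i=1..m. dn k p i) = n - k"
    using s count_le[of k m] assms(2) part_sum[OF assms(1)] by simp
  moreover have "\<forall>i. i \<notin> {1..m} \<longrightarrow> dn k p i = 0" using z assms(2) by (auto simp: dn_def)
  moreover have "\<forall>i\<in>{1..<m}. dn k p (Suc i) \<le> dn k p i"
  proof
    fix i assume i: "i \<in> {1..<m}"
    show "dn k p (Suc i) \<le> dn k p i"
    proof -
      have k1: "1 \<le> k" "k \<le> m" using assms(2) by auto
      have mi: "p (Suc i) \<le> p i" using m[OF i] .
      have i1: "1 \<le> i" using i by simp
      consider "Suc i \<le> k" | "i = k" | "k < i" by linarith
      then show ?thesis
      proof cases
        case 1 then show ?thesis using mi i1 by (simp add: dn_def)
      next
        case 2 then show ?thesis using assms(3) i1 by (simp add: dn_def Delta_def)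
      next
        case 3 then show ?thesis using mi by (simp add: dn_def)
      qed
    qed
  qed
  ultimately show "dn k p \<in> partitions m (n - k)" by (auto simp: partitions_def)
  show "dn k p 1 = p 1 - 1" using assms(2) by (auto simp: dn_def)
  have p0: "p 0 = 0" using z by auto
  show "Delta (dn k p) = (Delta p)(k := Delta p k - 1)"
  proof
    fix i
    show "Delta (dn k p) i = ((Delta p)(k := Delta p k - 1)) i"
    proof -
      have k1: "1 \<le> k" "k \<le> m" using assms(2) by auto
      consider "i = 0" | "1 \<le> i \<and> i < k" | "i = k" | "k < i" by linarith
      then show ?thesis
      proof cases
        case 1 then show ?thesis using p0 k1 by (simp add: dn_def Delta_def)
      next
        case 2
        have "1 \<le> p i" "1 \<le> p (Suc i)" using g' 2 by auto
        then show ?thesis using 2 by (simp add: dn_def Delta_def)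
      next
        case 3 then show ?thesis using k1 by (simp add: dn_def Delta_def)
      next
        case 4 then show ?thesis by (simp add: dn_def Delta_def)
      qed
    qed
  qed
  show "up k (dn k p) = p"
  proof
    fix x show "up k (dn k p) x = p x" using g'[of x] by (auto simp: dn_def up_def)
  qed
qed

lemma up_part:
  assumes "p \<in> partitions m n" "k \<in> {1..m}"
  shows "up k p \<in> partitions m (n + k)" and "Delta (up k p) k > 0" and "dn k (up k p) = p"
proof -
  note z = part_zero[OF assms(1)]
  have m: "\<And>i. i \<in> {1..<m} \<Longrightarrow> p (Suc i) \<le> p i" using assms(1) by (auto simp: partitions_def)
  have "(\<Sum>i=1..m. up k p i) = (\<Sum>i=1..m. p i) + (\<Sum>i=1..m. (if i \<le> k then 1 else 0::nat))"
    unfolding sum.distrib[symmetric] by (rule sum.cong) (auto simp: up_def)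
  then have "(\<Sum>i=1..m. up k p i) = n + k"
    using count_le[of k m] assms(2) part_sum[OF assms(1)] by simp
  moreover have "\<forall>i. i \<notin> {1..m} \<longrightarrow> up k p i = 0" using z assms(2) by (auto simp: up_def)
  moreover have "\<forall>i\<in>{1..<m}. up k p (Suc i) \<le> up k p i"
  proof
    fix i assume i: "i \<in> {1..<m}"
    show "up k p (Suc i) \<le> up k p i"
      using m[OF i] i by (auto simp: up_def)
  qed
  ultimately show "up k p \<in> partitions m (n + k)" by (auto simp: partitions_def)
  have "p (Suc k) \<le> p k" using mono_part[OF assms(1), of k "Suc k"] assms(2) by auto
  then show "Delta (up k p) k > 0" using assms(2) by (auto simp: up_def Delta_def)
  show "dn k (up k p) = p" by (auto simp: dn_def up_def fun_eq_iff)
qed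

lemma finite_partitions: "finite (partitions m n)"
proof -
  let ?L = "{xs. set xs \<subseteq> {..n} \<and> length xs = m}"
  let ?f = "\<lambda>xs i. if i \<in> {1..m} then xs ! (i - 1) else (0::nat)"
  have sub: "partitions m n \<subseteq> ?f ` ?L"
  proof
    fix p assume p: "p \<in> partitions m n"
    have le: "p i \<le> n" if "i \<in> {1..m}" for i
      using member_le_sum[of i "{1..m}" p] that part_sum[OF p] by simp
    let ?xs = "map (\<lambda>j. p (Suc j)) [0..<m]"
    have "set ?xs \<subseteq> {..n}"
    proof
      fix x assume "x \<in> set ?xs"
      then obtain j where j: "j < m" "x = p (Suc j)" by auto
      then show "x \<in> {..n}" using le[of "Suc j"] by simp
    qed
    then have xL: "?xs \<in> ?L" by simp
    have pf: "p = ?f ?xs"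
    proof
      fix i
      show "p i = ?f ?xs i"
      proof (cases "i \<in> {1..m}")
        case True
        then have "i - 1 < m" "Suc (i - 1) = i" by auto
        then show ?thesis using True by simp
      next
        case False
        have "p i = 0" using part_zero[OF p False] .
        moreover have "?f ?xs i = 0" using False by (simp del: atLeastAtMost_iff)
        ultimately show ?thesis by (rule trans[OF _ sym])
      qed
    qed
    show "p \<in> ?f ` ?L" using pf xL by (rule image_eqI)
  qed
  have "finite ?L" using finite_lists_length_eq[of "{..n}" m] by simp
  then have "finite (?f ` ?L)" by (rule finite_imageI)
  then show ?thesis using sub by (rule finite_subset[rotated])
qed

lemma multinom_step:
  assumes "k \<in> {1..m}" "j k > 0" "q > 0"
  shows "multinom m (q - 1) (j(k := j k - 1)) = real (j k) / real q * multinom m q j"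
proof -
  define R where "R = (\<Prod>i\<in>{1..m}-{k}. (fact (j i) :: real))"
  have P1: "(\<Prod>i=1..m. (fact ((j(k := j k - 1)) i) :: real)) = fact (j k - 1) * R"
    unfolding R_def using assms(1) by (subst prod.remove[of _ k]) (auto intro!: prod.cong)
  have P2: "(\<Prod>i=1..m. (fact (j i) :: real)) = fact (j k) * R"
    unfolding R_def using assms(1) by (subst prod.remove[of _ k]) auto
  have R0: "R \<noteq> 0" unfolding R_def by simp
  have f1: "(fact (j k) :: real) = real (j k) * fact (j k - 1)" using assms(2) fact_reduce by blast
  have f2: "(fact q :: real) = real q * fact (q - 1)" using assms(3) fact_reduce by blast
  show ?thesis unfolding multinom_def P1 P2 f1 f2 using R0 assms(2,3)
    by (simp add: field_simps)
qed

lemma multinom_rec: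
  assumes "q = (\<Sum>k=1..m. j k)" "q > 0"
  shows "multinom m q j = (\<Sum>k=1..m. if j k > 0 then multinom m (q - 1) (j(k := j k - 1)) else 0)"
proof -
  have "(\<Sum>k=1..m. if j k > 0 then multinom m (q - 1) (j(k := j k - 1)) else 0)
      = (\<Sum>k=1..m. real (j k) / real q * multinom m q j)"
  proof (rule sum.cong)
    fix k assume k: "k \<in> {1..m}"
    show "(if j k > 0 then multinom m (q - 1) (j(k := j k - 1)) else 0) = real (j k) / real q * multinom m q j"
      using multinom_step[OF k _ assms(2)] by auto
  qed simp
  also have "\<dots> = (\<Sum>k=1..m. real (j k)) / real q * multinom m q j"
    by (simp add: sum_distrib_right sum_divide_distrib)
  also have "(\<Sum>k=1..m. real (j k)) = real q" using assms(1) by simp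
  finally show ?thesis using assms(2) by simp
qed

lemma prod_upd:
  fixes m k :: nat
  assumes "k \<in> {1..m}" "j k > 0"
  shows "(\<Prod>i=1..m. (a i :: real) ^ j i) = a k * (\<Prod>i=1..m. a i ^ (j(k := j k - 1)) i)"
proof -
  have "(\<Prod>i=1..m. a i ^ j i) = a k ^ j k * (\<Prod>i\<in>{1..m}-{k}. a i ^ j i)"
    by (rule prod.remove) (use assms(1) in auto)
  moreover have "(\<Prod>i=1..m. a i ^ (j(k := j k - 1)) i) = a k ^ ((j(k := j k - 1)) k) * (\<Prod>i\<in>{1..m}-{k}. a i ^ (j(k := j k - 1)) i)"
    by (rule prod.remove) (use assms(1) in auto)
  moreover have "(\<Prod>i\<in>{1..m}-{k}. a i ^ (j(k := j k - 1)) i) = (\<Prod>i\<in>{1..m}-{k}. a i ^ j i)"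
    by (rule prod.cong) auto
  moreover have "a k ^ j k = a k * a k ^ (j k - 1)"
    using assms(2) by (cases "j k") auto
  ultimately show ?thesis by (simp only: fun_upd_same)
qed

definition Tm :: "nat \<Rightarrow> (nat \<Rightarrow> real) \<Rightarrow> nat \<Rightarrow> (nat \<Rightarrow> nat) \<Rightarrow> real" where
  "Tm m a n p = (-1) ^ (n + p 1) * multinom m (p 1) (Delta p) * (\<Prod>k=1..m. a k ^ Delta p k)"

definition cc :: "nat \<Rightarrow> (nat \<Rightarrow> real) \<Rightarrow> nat \<Rightarrow> real" where
  "cc m a n = (\<Sum>p\<in>partitions m n. Tm m a n p)"

lemma T_rel:
  assumes p: "p \<in> partitions m n" and n: "n > 0" and m: "m > 0"
  shows "Tm m a n p = (\<Sum>k=1..m. if Delta p k > 0 then (-1) ^ (k + 1) * a k * Tm m a (n - k) (dn k p) else 0)"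
proof -
  define q where "q = p 1"
  have q0: "q > 0" using p1_pos[OF p n] q_def by simp
  have qs: "q = (\<Sum>k=1..m. Delta p k)" using sum_Delta[OF p m] q_def by simp
  define s where "s = ((-1::real) ^ (n + q))"
  define A where "A = (\<Prod>k=1..m. a k ^ Delta p k)"
  have "Tm m a n p = s * multinom m q (Delta p) * A" unfolding Tm_def s_def A_def q_def by simp
  also have "\<dots> = (\<Sum>k=1..m. if Delta p k > 0 then s * multinom m (q - 1) ((Delta p)(k := Delta p k - 1)) * A else 0)"
    unfolding multinom_rec[OF qs q0] sum_distrib_left sum_distrib_right
    by (rule sum.cong) auto
  also have "\<dots> = (\<Sum>k=1..m. if Delta p k > 0 then (-1) ^ (k + 1) * a k * Tm m a (n - k) (dn k p) else 0)"
  proof (rule sum.cong)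
    fix k assume k: "k \<in> {1..m}"
    show "(if Delta p k > 0 then s * multinom m (q - 1) ((Delta p)(k := Delta p k - 1)) * A else 0)
        = (if Delta p k > 0 then (-1) ^ (k + 1) * a k * Tm m a (n - k) (dn k p) else 0)"
    proof (cases "Delta p k > 0")
      case True
      note d = dn_part[OF p k True]
      have kn: "k \<le> n" using k_le_n[OF p k True] .
      have A: "A = a k * (\<Prod>i=1..m. a i ^ ((Delta p)(k := Delta p k - 1)) i)"
        unfolding A_def by (rule prod_upd[of k m "Delta p" a, OF k True])
      have e: "n + q = (k + 1) + ((n - k) + (q - 1))" using kn q0 by simp
      have s: "s = (-1) ^ (k + 1) * (-1) ^ ((n - k) + (q - 1))"
        unfolding s_def e power_add by simp
      show ?thesis using True unfolding Tm_def d(2,3) A s q_def by simp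
    qed simp
  qed simp
  finally show ?thesis .
qed

lemma c_rec:
  assumes n: "n > 0" and m: "m > 0"
  shows "cc m a n = (\<Sum>k=1..m. if k \<le> n then (-1) ^ (k + 1) * a k * cc m a (n - k) else 0)"
proof -
  have "cc m a n = (\<Sum>p\<in>partitions m n. \<Sum>k=1..m. if Delta p k > 0 then (-1) ^ (k + 1) * a k * Tm m a (n - k) (dn k p) else 0)"
    unfolding cc_def by (rule sum.cong) (auto simp: T_rel n m)
  also have "\<dots> = (\<Sum>k=1..m. \<Sum>p\<in>partitions m n. if Delta p k > 0 then (-1) ^ (k + 1) * a k * Tm m a (n - k) (dn k p) else 0)"
    by (rule sum.swap)
  also have "\<dots> = (\<Sum>k=1..m. if k \<le> n then (-1) ^ (k + 1) * a k * cc m a (n - k) else 0)"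
  proof (rule sum.cong)
    fix k assume k: "k \<in> {1..m}"
    show "(\<Sum>p\<in>partitions m n. if Delta p k > 0 then (-1) ^ (k + 1) * a k * Tm m a (n - k) (dn k p) else 0)
      = (if k \<le> n then (-1) ^ (k + 1) * a k * cc m a (n - k) else 0)"
    proof (cases "k \<le> n")
      case True
      have "(\<Sum>p\<in>partitions m n. if Delta p k > 0 then (-1) ^ (k + 1) * a k * Tm m a (n - k) (dn k p) else 0)
          = (\<Sum>p\<in>{p\<in>partitions m n. Delta p k > 0}. (-1) ^ (k + 1) * a k * Tm m a (n - k) (dn k p))"
        by (rule sum.inter_filter[symmetric]) (rule finite_partitions)
      also have "\<dots> = (\<Sum>p'\<in>partitions m (n - k). (-1) ^ (k + 1) * a k * Tm m a (n - k) p')"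
      proof (rule sum.reindex_bij_witness[where i = "up k" and j = "dn k"])
        fix p assume "p \<in> {p\<in>partitions m n. Delta p k > 0}"
        then have p: "p \<in> partitions m n" "Delta p k > 0" by auto
        note d = dn_part[OF p(1) k p(2)]
        show "up k (dn k p) = p" by (rule d(4))
        show "dn k p \<in> partitions m (n - k)" by (rule d(1))
        show "(-1) ^ (k + 1) * a k * Tm m a (n - k) (dn k p) = (-1) ^ (k + 1) * a k * Tm m a (n - k) (dn k p)" ..
      next
        fix p' assume p': "p' \<in> partitions m (n - k)"
        note u = up_part[OF p' k]
        show "dn k (up k p') = p'" by (rule u(3))
        show "up k p' \<in> {p\<in>partitions m n. Delta p k > 0}" using u(1,2) True by auto
      qed
      also have "\<dots> = (-1) ^ (k + 1) * a k * cc m a (n - k)"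
        unfolding cc_def by (simp add: sum_distrib_left)
      finally show ?thesis using True by simp
    next
      case False
      have z: "(if Delta p k > 0 then (-1) ^ (k + 1) * a k * Tm m a (n - k) (dn k p) else 0) = (0::real)"
        if "p \<in> partitions m n" for p
        using k_le_n[OF that k] False by auto
      show ?thesis using False by (simp add: sum.neutral z)
    qed
  qed simp
  finally show ?thesis .
qed

lemma cc0: "cc m a 0 = 1"
proof -
  have "partitions m 0 = {\<lambda>_. 0}"
  proof
    show "partitions m 0 \<subseteq> {\<lambda>_. 0}"
    proof
      fix p assume p: "p \<in> partitions m 0"
      have "\<forall>i\<in>{1..m}. p i = 0" using part_sum[OF p] by simp
      then have "p = (\<lambda>_. 0)" using part_zero[OF p] by (auto simp: fun_eq_iff)
      then show "p \<in> {\<lambda>_. 0}" by simp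
    qed
    show "{\<lambda>_. 0} \<subseteq> partitions m 0" by (auto simp: partitions_def)
  qed
  moreover have "Delta (\<lambda>_. 0) = (\<lambda>_. 0)" by (auto simp: Delta_def fun_eq_iff)
  ultimately show ?thesis by (simp add: cc_def Tm_def multinom_def)
qed

lemma coeff_monsum: "coeff (\<Sum>i\<le>m. monom (f i) i) n = (if n \<le> m then f n else 0)"
  by (simp add: coeff_sum coeff_monom)

lemma degree_monsum: "degree (\<Sum>i\<le>m. monom (f i) i) \<le> m"
  by (rule degree_le) (auto simp: coeff_monsum)

theorem proposition2p1p2:
  fixes F :: "real \<Rightarrow> real" and m :: nat
  assumes "m > 0"
    and "distribution_function F"
    and "integrable (interval_measure F) (\<lambda>x. \<bar>x\<bar> ^ m)"
  shows "trunc_invertible m (L_op F m)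
    \<and> degree (L_inv_formula F m) \<le> m
    \<and> tmult m (L_op F m) (L_inv_formula F m) = 1
    \<and> tmult m (L_inv_formula F m) (L_op F m) = 1"
proof -
  define a where "a = (\<lambda>k. moment F k / fact k)"
  define l where "l = (\<lambda>k::nat. (-1::real) ^ k / fact k * moment F k)"
  define Q where "Q = L_inv_formula F m"
  define L where "L = L_op F m"
  have Qeq: "Q = (\<Sum>n\<le>m. monom (cc m a n) n)"
    unfolding Q_def L_inv_formula_def cc_def Tm_def a_def by simp
  have Leq: "L = (\<Sum>k\<le>m. monom (l k) k)" unfolding L_def L_op_def l_def by simp
  have df: "mono F" "\<And>a. continuous (at_right a) F" "(F \<longlongrightarrow> 0) at_bot" "(F \<longlongrightarrow> 1) at_top"
    using assms(2) unfolding distribution_function_def by auto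
  have rd: "real_distribution (interval_measure F)"
    by (rule real_distribution_interval_measure) (use df in \<open>auto dest: monoD\<close>)
  then interpret real_distribution "interval_measure F" .
  have "prob (space (interval_measure F)) = 1" by (rule prob_space)
  then have pU: "prob UNIV = 1" by simp
  have mom0: "moment F 0 = 1" using pU by (simp add: moment_def)
  have l0: "l 0 = 1" using mom0 by (simp add: l_def)
  have key: "coeff (L * Q) i = (if i = 0 then 1 else 0)" if i: "i \<le> m" for i
  proof -
    have c: "coeff (L * Q) i = (\<Sum>j\<le>i. l j * cc m a (i - j))"
      unfolding coeff_mult Leq Qeq coeff_monsum by (rule sum.cong) (use i in auto)
    show ?thesis
    proof (cases "i = 0")
      case True then show ?thesis using c l0 cc0 by simp
    next
      case False
      have "{..i} = insert 0 {1..i}" by auto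
      then have s1: "(\<Sum>j\<le>i. l j * cc m a (i - j)) = cc m a i + (\<Sum>j=1..i. l j * cc m a (i - j))"
        using l0 by (simp add: sum.insert)
      have "cc m a i = (\<Sum>k=1..m. if k \<le> i then (-1) ^ (k + 1) * a k * cc m a (i - k) else 0)"
        using c_rec[of i m a] False assms(1) by simp
      also have "\<dots> = (\<Sum>k\<in>{k\<in>{1..m}. k \<le> i}. (-1) ^ (k + 1) * a k * cc m a (i - k))"
        by (rule sum.inter_filter[symmetric]) simp
      also have "{k\<in>{1..m}. k \<le> i} = {1..i}" using i by auto
      finally have s2: "cc m a i = (\<Sum>k=1..i. (-1) ^ (k + 1) * a k * cc m a (i - k))" .
      have s3: "(\<Sum>j=1..i. l j * cc m a (i - j)) = - (\<Sum>k=1..i. (-1) ^ (k + 1) * a k * cc m a (i - k))"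
        unfolding sum_negf[symmetric] by (rule sum.cong) (simp_all add: l_def a_def)
      show ?thesis using False c s1 s2 s3 by simp
    qed
  qed
  have T1: "tmult m L Q = 1"
    by (rule poly_eqI) (auto simp: tmult_def coeff_monsum key)
  have "tmult m Q L = tmult m L Q" unfolding tmult_def by (subst mult.commute) (rule refl)
  then have T2: "tmult m Q L = 1" using T1 by (rule trans)
  have dL: "degree L \<le> m" unfolding Leq by (rule degree_monsum)
  have dQ: "degree Q \<le> m" unfolding Qeq by (rule degree_monsum)
  have inv: "trunc_invertible m L" unfolding trunc_invertible_def
    using T1 T2 dL dQ by blast
  show ?thesis using inv dQ T1 T2 unfolding L_def Q_def by (intro conjI) assumption+
qed

end
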